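(* In the curved-exam game described in the context, let $x^*=(x_1^*,\dots,x_n^* )$ be a pure Nash equilibrium in which there is a curve ($\bar x^*:=\frac1n\sum_j x_j^*<m$) and every student exerts positive effort ($x_i^*>0$ for all $i$). Define $$\hat\alpha_n:=n\Big(1-\Big(\sum_{i=1}^n\frac{1}{n-\alpha_i}\Big)^{-1}\Big)=n-\mathrm{HarmonicMean}(n-\alpha_1,\dots,n-\alpha_n).$$ Then $\min_i\alpha_i\le\hat\alpha_n\le\max_i\alpha_i$, $$\bar x^*=1-\frac{nm}{n-1}\Big(\frac1{\hat\alpha_n}-1\Big),\qquad\text{and}\qquad x_i^*=\frac{(n-1)\alpha_i-n(1-\alpha_i)(m-\bar x^* )}{n-\alpha_i}\ \text{ for each } i.$$
   Context: The curved-exam game: fix $n\ge2$, abilities $\alpha_1,\dots,\alpha_n\in(0,1)$, target mean $m\in(0,1)$. Student $i$ chooses $x_i\in[0,1]$; $\bar x=\frac1n\sum_j x_j$, $\bar x_{-i}=\frac1{n-1}\sum_{j\ne i}x_j$. Grade $G_i(x)=x_i+\max(m-\bar x,0)=\max\big(m+\frac{n-1}{n}(x_i-\bar x_{-i}),x_i\big)$ (not truncated at 1); payoff $U_i(x)=G_i(x)^{\alpha_i}(1-x_i)^{1-\alpha_i}$. A pure Nash equilibrium is a profile where each $x_i$ maximizes $U_i(\cdot,x_{-i})$ over $[0,1]$. *)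

theory Defs
  imports Complex_Main
begin

text \<open>Students are indexed by 0,...,n-1; a profile is a function nat => real
  of which only the values at i < n matter.\<close>

definition xbar :: "nat \<Rightarrow> (nat \<Rightarrow> real) \<Rightarrow> real" where
  "xbar n x = (\<Sum>j<n. x j) / real n"

definition grade :: "nat \<Rightarrow> real \<Rightarrow> (nat \<Rightarrow> real) \<Rightarrow> nat \<Rightarrow> real" where
  "grade n m x i = x i + max (m - xbar n x) 0"

definition payoff :: "nat \<Rightarrow> (nat \<Rightarrow> real) \<Rightarrow> real \<Rightarrow> (nat \<Rightarrow> real) \<Rightarrow> nat \<Rightarrow> real" where
  "payoff n alpha m x i = grade n m x i powr alpha i * (1 - x i) powr (1 - alpha i)"

definition pure_nash :: "nat \<Rightarrow> (nat \<Rightarrow> real) \<Rightarrow> real \<Rightarrow> (nat \<Rightarrow> real) \<Rightarrow> bool" where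
  "pure_nash n alpha m x \<longleftrightarrow>
     (\<forall>i<n. x i \<in> {0..1} \<and>
        (\<forall>y\<in>{0..1}. payoff n alpha m (x(i := y)) i \<le> payoff n alpha m x i))"

definition alpha_hat :: "nat \<Rightarrow> (nat \<Rightarrow> real) \<Rightarrow> real" where
  "alpha_hat n alpha = real n * (1 - 1 / (\<Sum>i<n. 1 / (real n - alpha i)))"

end

theory Submission
  imports Defs
begin

lemma sum_upd:
  fixes n :: nat and x :: "nat \<Rightarrow> real"
  assumes "i < n"
  shows "(\<Sum>j<n. (x(i:=y)) j) = (\<Sum>j<n. x j) + (y - x i)"
proof -
  have "(\<Sum>j<n. (x(i:=y)) j) = (x(i:=y)) i + (\<Sum>j\<in>{..<n}-{i}. (x(i:=y)) j)"
    using assms sum.remove[of "{..<n}" i "x(i:=y)"] by simp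
  also have "(\<Sum>j\<in>{..<n}-{i}. (x(i:=y)) j) = (\<Sum>j\<in>{..<n}-{i}. x j)"
    by (rule sum.cong) auto
  also have "(\<Sum>j<n. x j) = x i + (\<Sum>j\<in>{..<n}-{i}. x j)"
    using assms sum.remove[of "{..<n}" i x] by simp
  ultimately show ?thesis by simp
qed

lemma xbar_upd:
  fixes n :: nat and x :: "nat \<Rightarrow> real"
  assumes "i < n"
  shows "xbar n (x(i:=y)) = xbar n x + (y - x i) / real n"
  using sum_upd[OF assms, of x y] unfolding xbar_def by (simp add: add_divide_distrib diff_divide_distrib)

lemma foc:
  assumes n2: "n \<ge> 2" and i: "i < n" and a0: "0 < alpha i" and a1: "alpha i < 1"
    and nash: "pure_nash n alpha m x" and curve: "xbar n x < m" and xpos: "0 < x i"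
  shows "x i * (real n - alpha i) = (real n - 1) * alpha i - real n * (1 - alpha i) * (m - xbar n x)"
proof -
  define a where "a = alpha i"
  define d where "d = m - xbar n x"
  define k :: real where "k = (real n - 1) / real n"
  define c where "c = x i + d - k * x i"
  have d0: "d > 0" using curve d_def by simp
  have npos: "real n > 0" using n2 by simp
  have x1: "x i \<le> 1" and opt: "\<And>y. y \<in> {0..1} \<Longrightarrow> payoff n alpha m (x(i := y)) i \<le> payoff n alpha m x i"
    using nash i unfolding pure_nash_def by auto
  have gr: "grade n m (x(i:=y)) i = c + k * y" if "y < x i + real n * d" for y
  proof -
    have "m - xbar n (x(i:=y)) = d - (y - x i) / real n"
      using xbar_upd[OF i] d_def by simp
    moreover have "(y - x i) / real n < d" using that npos by (simp add: divide_less_eq mult.commute)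
    ultimately have "max (m - xbar n (x(i:=y))) 0 = d - (y - x i) / real n" by simp
    hence "grade n m (x(i:=y)) i = y + (d - (y - x i) / real n)" unfolding grade_def by simp
    moreover have kk: "k = 1 - 1 / real n" unfolding k_def using npos by (simp add: field_simps)
    ultimately show ?thesis unfolding c_def kk by (simp add: algebra_simps diff_divide_distrib)
  qed
  have xl1: "x i < 1"
  proof (rule ccontr)
    assume "\<not> x i < 1"
    hence xe: "x i = 1" using x1 by simp
    have "payoff n alpha m x i = 0" unfolding payoff_def using xe a1 by simp
    moreover have "payoff n alpha m (x(i := 0)) i > 0"
    proof -
      have "m - xbar n (x(i:=0)) = d + x i / real n" using xbar_upd[OF i, of x 0] d_def by simp
      hence "grade n m (x(i:=0)) i > 0" unfolding grade_def using d0 xpos npos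
        by (simp add: add_pos_pos)
      thus ?thesis unfolding payoff_def by simp
    qed
    moreover have "payoff n alpha m (x(i := 0)) i \<le> payoff n alpha m x i" using opt by simp
    ultimately show False by simp
  qed
  define f where "f y = (c + k * y) powr a * (1 - y) powr (1 - a)" for y
  have G: "c + k * x i = x i + d" unfolding c_def by simp
  have Gpos: "c + k * x i > 0" using G xpos d0 by simp
  have ompos: "1 - x i > 0" using xl1 by simp
  define l where "l = a * (c + k * x i) powr (a - 1) * k * (1 - x i) powr (1 - a)
      + (1 - a) * (1 - x i) powr (1 - a - 1) * (-1) * (c + k * x i) powr a"
  have der: "DERIV f (x i) :> l"
  proof -
    have d1: "DERIV (\<lambda>y. c + k * y) (x i) :> k" by (auto intro!: derivative_eq_intros)
    have d2: "DERIV (\<lambda>y. 1 - y) (x i) :> -1" by (auto intro!: derivative_eq_intros)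
    have e1: "DERIV (\<lambda>y. (c + k * y) powr a) (x i) :> a * (c + k * x i) powr (a - of_nat 1) * k"
      by (rule DERIV_fun_powr[OF d1 Gpos])
    have e2: "DERIV (\<lambda>y. (1 - y) powr (1 - a)) (x i) :> (1 - a) * (1 - x i) powr (1 - a - of_nat 1) * (-1)"
      by (rule DERIV_fun_powr[OF d2 ompos])
    have "DERIV f (x i) :> a * (c + k * x i) powr (a - of_nat 1) * k * (1 - x i) powr (1 - a)
      + (1 - a) * (1 - x i) powr (1 - a - of_nat 1) * (-1) * (c + k * x i) powr a"
      unfolding f_def by (rule DERIV_mult[OF e1 e2])
    thus ?thesis unfolding l_def by simp
  qed
  define del where "del = min (x i) (min (1 - x i) (real n * d))"
  have del0: "del > 0" unfolding del_def using xpos ompos d0 npos by simp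
  have loc: "\<forall>y. \<bar>x i - y\<bar> < del \<longrightarrow> f y \<le> f (x i)"
  proof (intro allI impI)
    fix y assume "\<bar>x i - y\<bar> < del"
    hence y01: "y \<in> {0..1}" and ylt: "y < x i + real n * d" unfolding del_def by auto
    have "f y = payoff n alpha m (x(i := y)) i"
      unfolding f_def payoff_def gr[OF ylt] a_def by simp
    moreover have "f (x i) = payoff n alpha m x i"
      using gr[of "x i"] d0 npos unfolding f_def payoff_def a_def by simp
    ultimately show "f y \<le> f (x i)" using opt[OF y01] by simp
  qed
  have l0: "l = 0" by (rule DERIV_local_max[OF der del0 loc])
  define P where "P = (c + k * x i) powr a"
  define Q where "Q = (1 - x i) powr (1 - a)"
  have P0: "P > 0" unfolding P_def using Gpos by simp
  have Q0: "Q > 0" unfolding Q_def using ompos by simp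
  have p1: "(c + k * x i) powr (a - 1) = P / (c + k * x i)"
  proof -
    have "(c + k * x i) powr (a - 1) = (c + k * x i) powr a / (c + k * x i) powr 1" by (rule powr_diff)
    thus ?thesis unfolding P_def using Gpos by simp
  qed
  have q1: "(1 - x i) powr (1 - a - 1) = Q / (1 - x i)"
  proof -
    have "(1 - x i) powr ((1 - a) - 1) = (1 - x i) powr (1 - a) / (1 - x i) powr 1" by (rule powr_diff)
    thus ?thesis unfolding Q_def using ompos by simp
  qed
  have "P * Q * (a * k / (c + k * x i) - (1 - a) / (1 - x i)) = 0"
  proof -
    have "l = P * Q * (a * k / (c + k * x i) - (1 - a) / (1 - x i))"
      unfolding l_def p1 q1 P_def[symmetric] Q_def[symmetric] by (simp add: algebra_simps add_divide_distrib[symmetric])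
    thus ?thesis using l0 by simp
  qed
  hence "a * k / (c + k * x i) = (1 - a) / (1 - x i)" using P0 Q0 by simp
  hence "a * k * (1 - x i) = (1 - a) * (x i + d)" using Gpos ompos G by (simp add: field_simps)
  hence "a * (real n - 1) * (1 - x i) = real n * (1 - a) * (x i + d)"
    unfolding k_def using npos by (simp add: field_simps)
  thus ?thesis unfolding a_def d_def by (simp add: algebra_simps)
qed


lemma alg1: fixes N h m :: real assumes "N > 1" "h > 1"
  shows "N * m / (N - 1) * ((N - (N - 1) * h) / (N * (h - 1))) = m * (N - (N - 1) * h) / ((N - 1) * (h - 1))"
proof -
  have "N * m / (N - 1) * ((N - (N - 1) * h) / (N * (h - 1))) = (N * (m * (N - (N - 1) * h))) / (N * ((N - 1) * (h - 1)))"
    by (simp add: ac_simps)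
  also have "\<dots> = m * (N - (N - 1) * h) / ((N - 1) * (h - 1))"
    using assms by (subst mult_divide_mult_cancel_left) auto
  finally show ?thesis .
qed

lemma sum_aux:
  fixes f :: "nat \<Rightarrow> real"
  shows "(\<Sum>i<n. A * (B * f i - 1) - C * (1 - E * f i))
     = A * (B * (\<Sum>i<n. f i) - real n) - C * (real n - E * (\<Sum>i<n. f i))"
proof -
  have "(\<Sum>i<n. A * (B * f i - 1) - C * (1 - E * f i))
      = (\<Sum>i<n. (A * B + C * E) * f i - (A + C))"
    by (rule sum.cong) (auto simp: algebra_simps)
  also have "\<dots> = (A * B + C * E) * (\<Sum>i<n. f i) - real n * (A + C)"
    by (simp add: sum_subtractf sum_distrib_left)
  finally show ?thesis by (simp add: algebra_simps)
qed

theorem mainTheorem8: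
  fixes n :: nat and alpha x :: "nat \<Rightarrow> real" and m :: real
  assumes "n \<ge> 2"
    and "\<forall>i<n. 0 < alpha i \<and> alpha i < 1"
    and "0 < m" and "m < 1"
    and "pure_nash n alpha m x"
    and "xbar n x < m"
    and "\<forall>i<n. x i > 0"
  shows "Min (alpha ` {..<n}) \<le> alpha_hat n alpha
       \<and> alpha_hat n alpha \<le> Max (alpha ` {..<n})
       \<and> xbar n x = 1 - real n * m / (real n - 1) * (1 / alpha_hat n alpha - 1)
       \<and> (\<forall>i<n. x i = ((real n - 1) * alpha i - real n * (1 - alpha i) * (m - xbar n x))
                        / (real n - alpha i))"
proof -
  note n2 = assms(1) and al = assms(2)
  define d where "d = m - xbar n x"
  define h where "h = (\<Sum>i<n. 1 / (real n - alpha i))"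
  have npos: "real n > 1" using n2 by simp
  have nal: "real n - alpha i > 0" if "i < n" for i using al that npos by force
  have xi: "x i = ((real n - 1) * alpha i - real n * (1 - alpha i) * (m - xbar n x)) / (real n - alpha i)"
    if i: "i < n" for i
    using foc[OF n2 i _ _ assms(5) assms(6)] al assms(7) i nal[OF i] by (simp add: field_simps)
  have xi2: "x i = (real n - 1) * (real n * (1 / (real n - alpha i)) - 1)
       - real n * d * (1 - (real n - 1) * (1 / (real n - alpha i)))" if i: "i < n" for i
  proof -
    have D: "real n - alpha i \<noteq> 0" using nal[OF i] by simp
    have q1: "real n * (1 / (real n - alpha i)) - 1 = alpha i / (real n - alpha i)"
      using D by (simp add: field_simps)
    have q2: "1 - (real n - 1) * (1 / (real n - alpha i)) = (1 - alpha i) / (real n - alpha i)"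
      using D by (simp add: field_simps)
    show ?thesis unfolding xi[OF i] d_def q1 q2 by (simp add: diff_divide_distrib[symmetric])
  qed
  have "(\<Sum>i<n. x i) = (\<Sum>i<n. (real n - 1) * (real n * (1 / (real n - alpha i)) - 1)
       - real n * d * (1 - (real n - 1) * (1 / (real n - alpha i))))"
    by (rule sum.cong) (auto simp: xi2)
  also have "\<dots> = (real n - 1) * (real n * h - real n) - real n * d * (real n - (real n - 1) * h)"
    unfolding h_def by (rule sum_aux)
  finally have S: "(\<Sum>i<n. x i) = (real n - 1) * (real n * h - real n) - real n * d * (real n - (real n - 1) * h)" .
  have XB: "xbar n x = (real n - 1) * (h - 1) - d * (real n - (real n - 1) * h)"
    unfolding xbar_def S using npos by (simp add: field_simps)
  have h1: "h > 1"
  proof -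
    have "(\<Sum>i<n. 1 / real n) < h" unfolding h_def
    proof (rule sum_strict_mono)
      show "{..<n} \<noteq> {}" using n2 by (auto simp: lessThan_empty_iff)
      fix i assume "i \<in> {..<n}"
      thus "1 / real n < 1 / (real n - alpha i)" using al nal npos
        by (intro divide_strict_left_mono) auto
    qed simp
    thus ?thesis using npos by simp
  qed
  have ah: "alpha_hat n alpha = real n * (1 - 1 / h)" unfolding alpha_hat_def h_def by simp
  have ahpos: "alpha_hat n alpha > 0" unfolding ah using h1 npos by simp
  have part3: "xbar n x = 1 - real n * m / (real n - 1) * (1 / alpha_hat n alpha - 1)"
  proof -
    have e1: "1 / alpha_hat n alpha - 1 = (real n - (real n - 1) * h) / (real n * (h - 1))"
      unfolding ah using h1 npos by (simp add: field_simps)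
    have "xbar n x * (real n - 1) * (h - 1) = (real n - 1) * (h - 1) - m * (real n - (real n - 1) * h)"
      using XB unfolding d_def by (simp add: algebra_simps)
    define K where "K = (real n - 1) * (h - 1)"
    have K0: "K > 0" unfolding K_def using h1 npos by simp
    have xk: "xbar n x * K = K - m * (real n - (real n - 1) * h)"
      using \<open>xbar n x * (real n - 1) * (h - 1) = _\<close> unfolding K_def by (simp add: mult.assoc)
    have e2: "real n * m / (real n - 1) * ((real n - (real n - 1) * h) / (real n * (h - 1)))
       = m * (real n - (real n - 1) * h) / K"
      unfolding K_def by (rule alg1[OF npos h1])
    have "xbar n x = (K - m * (real n - (real n - 1) * h)) / K"
      using xk K0 by (simp add: field_simps)
    also have "\<dots> = 1 - m * (real n - (real n - 1) * h) / K"
      using K0 by (simp add: diff_divide_distrib)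
    finally show ?thesis unfolding e1 e2 .
  qed
  have fin: "finite (alpha ` {..<n})" and ne: "alpha ` {..<n} \<noteq> {}" using n2 by (auto simp: lessThan_empty_iff)
  define M where "M = Max (alpha ` {..<n})"
  define L where "L = Min (alpha ` {..<n})"
  have Mi: "alpha i \<le> M" "L \<le> alpha i" if "i < n" for i
    unfolding M_def L_def using fin that by auto
  have M1: "M < 1" and L0: "L > 0" and L1: "L < 1" using Max_in[OF fin ne] Min_in[OF fin ne] al unfolding M_def L_def by auto
  have "h \<le> (\<Sum>i<n. 1 / (real n - M))" unfolding h_def
    by (rule sum_mono) (use Mi nal npos M1 in \<open>auto intro!: divide_left_mono mult_pos_pos\<close>)
  hence hM: "h \<le> real n / (real n - M)" by simp
  have "h \<ge> (\<Sum>i<n. 1 / (real n - L))" unfolding h_def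
    by (rule sum_mono) (use Mi nal npos L0 L1 in \<open>auto intro!: divide_left_mono mult_pos_pos\<close>)
  hence hL: "h \<ge> real n / (real n - L)" by simp
  have p2: "alpha_hat n alpha \<le> M"
  proof -
    have nM: "real n - M > 0" using M1 npos by simp
    have "h * (real n - M) \<le> real n" using hM nM by (simp add: pos_le_divide_eq)
    thus ?thesis unfolding ah using h1 by (simp add: field_simps)
  qed
  have p1: "L \<le> alpha_hat n alpha"
  proof -
    have nL: "real n - L > 0" using L1 npos by simp
    have "h * (real n - L) \<ge> real n" using hL nL by (simp add: pos_divide_le_eq)
    thus ?thesis unfolding ah using h1 by (simp add: field_simps)
  qed
  show ?thesis using p1 p2 part3 xi unfolding M_def L_def by blast
qed

end
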